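(* For every $x\in\mathcal{X}$, $N\in\mathbb{N}^+$ and $\delta>0$, $$\tilde\rho_N(x)-\rho(x)\le\delta+2\sup_{x'\in\mathcal{X}}\mathbb{P}_{Q_{x',N}}\left[|W_{x',N}-1|\ge\frac{\delta}{2}\right].$$
   Context: Let $(\mathcal{X},\mathcal{B}(\mathcal{X}))$ be a measurable space, $\pi$ a probability distribution on it with density $\pi(x)$ with respect to a reference measure, and $q$ a Markov proposal kernel. For each $x\in\mathcal{X}$, $N\in\mathbb{N}^+$, $Q_{x,N}$ is a probability distribution on $[0,\infty)$ such that $W_{x,N}\sim Q_{x,N}$ satisfies $W_{x,N}>0$ a.s. and $\mathbb{E}[W_{x,N}]=1$. Define $\alpha(x,y)=\min\{1,\frac{\pi(dy)q(y,dx)}{\pi(dx)q(x,dy)}\}$, $\rho(x)=1-\int\alpha(x,y)q(x,dy)$, $\tilde\alpha_N(x,y)=\mathbb{E}[\min\{1,\frac{\pi(dy)q(y,dx)}{\pi(dx)q(x,dy)}\frac{W_{y,N}}{W_{x,N}}\}]$ with $W_{x,N}\sim Q_{x,N}$ and $W_{y,N}\sim Q_{y,N}$ independent, and $\tilde\rho_N(x)=1-\int\tilde\alpha_N(x,y)q(x,dy)$. *)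

theory Defs
  imports "HOL-Probability.Probability"
begin

definition pq_measure :: "'a measure \<Rightarrow> 'a measure \<Rightarrow> ('a \<Rightarrow> 'a measure) \<Rightarrow> ('a \<times> 'a) measure" where
  "pq_measure M \<pi> q = \<pi> \<bind> (\<lambda>x. distr (q x) (M \<Otimes>\<^sub>M M) (\<lambda>y. (x, y)))"

text \<open>The Metropolis-Hastings ratio pi(dy)q(y,dx) / (pi(dx)q(x,dy)), as a Radon-Nikodym
  derivative of the swapped joint measure with respect to the joint measure.\<close>
definition mh_ratio :: "'a measure \<Rightarrow> 'a measure \<Rightarrow> ('a \<Rightarrow> 'a measure) \<Rightarrow> 'a \<times> 'a \<Rightarrow> ennreal" where
  "mh_ratio M \<pi> q = RN_deriv (pq_measure M \<pi> q)
      (distr (pq_measure M \<pi> q) (M \<Otimes>\<^sub>M M) (\<lambda>(x, y). (y, x)))"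

definition mh_alpha :: "'a measure \<Rightarrow> 'a measure \<Rightarrow> ('a \<Rightarrow> 'a measure) \<Rightarrow> 'a \<Rightarrow> 'a \<Rightarrow> real" where
  "mh_alpha M \<pi> q x y = enn2real (min 1 (mh_ratio M \<pi> q (x, y)))"

definition mh_rho :: "'a measure \<Rightarrow> 'a measure \<Rightarrow> ('a \<Rightarrow> 'a measure) \<Rightarrow> 'a \<Rightarrow> real" where
  "mh_rho M \<pi> q x = 1 - (\<integral>y. mh_alpha M \<pi> q x y \<partial>(q x))"

definition pm_alpha :: "'a measure \<Rightarrow> 'a measure \<Rightarrow> ('a \<Rightarrow> 'a measure) \<Rightarrow> ('a \<Rightarrow> nat \<Rightarrow> real measure)
    \<Rightarrow> nat \<Rightarrow> 'a \<Rightarrow> 'a \<Rightarrow> real" where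
  "pm_alpha M \<pi> q Q N x y =
     (\<integral>wx. (\<integral>wy. enn2real (min 1 (mh_ratio M \<pi> q (x, y) * ennreal (wy / wx))) \<partial>(Q y N)) \<partial>(Q x N))"

definition pm_rho :: "'a measure \<Rightarrow> 'a measure \<Rightarrow> ('a \<Rightarrow> 'a measure) \<Rightarrow> ('a \<Rightarrow> nat \<Rightarrow> real measure)
    \<Rightarrow> nat \<Rightarrow> 'a \<Rightarrow> real" where
  "pm_rho M \<pi> q Q N x = 1 - (\<integral>y. pm_alpha M \<pi> q Q N x y \<partial>(q x))"

end

theory Submission imports Defs begin

lemma integral_measurable_subprob_algebra2:
  fixes f :: "_ \<Rightarrow> _ \<Rightarrow> real"
  assumes f[measurable]: "(\<lambda>(x, y). f x y) \<in> borel_measurable (M \<Otimes>\<^sub>M N)"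
  assumes N[measurable]: "L \<in> measurable M (subprob_algebra N)"
  shows "(\<lambda>x. integral\<^sup>L (L x) (f x)) \<in> borel_measurable M"
proof -
  note integral_measurable_subprob_algebra[measurable]
  note measurable_distr2[measurable]
  have "(\<lambda>x. integral\<^sup>L (distr (L x) (M \<Otimes>\<^sub>M N) (\<lambda>y. (x, y))) (\<lambda>(x, y). f x y)) \<in> borel_measurable M"
    by measurable
  then show ?thesis
  proof (rule measurable_cong[THEN iffD1, rotated])
    fix x assume x: "x \<in> space M"
    have "integral\<^sup>L (distr (L x) (M \<Otimes>\<^sub>M N) (\<lambda>y. (x, y))) (\<lambda>(x, y). f x y)
        = integral\<^sup>L (L x) (\<lambda>y. (\<lambda>(x, y). f x y) (x,y))"
    proof (rule integral_distr)
      have sL: "sets (L x) = sets N" using sets_kernel[OF N x] .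
      show "Pair x \<in> L x \<rightarrow>\<^sub>M M \<Otimes>\<^sub>M N"
        by (subst measurable_cong_sets[OF sL refl]) (simp add: x)
    qed (rule f)
    then show "integral\<^sup>L (distr (L x) (M \<Otimes>\<^sub>M N) (\<lambda>y. (x, y))) (\<lambda>(x, y). f x y) = integral\<^sup>L (L x) (f x)"
      by simp
  qed
qed

lemma integral_01:
  fixes f :: "_ \<Rightarrow> real"
  assumes "prob_space M" "\<And>x. 0 \<le> f x" "\<And>x. f x \<le> 1"
  shows "0 \<le> integral\<^sup>L M f \<and> integral\<^sup>L M f \<le> 1"
proof (cases "integrable M f")
  case True
  interpret prob_space M by fact
  have "integral\<^sup>L M f \<le> integral\<^sup>L M (\<lambda>_. 1)"
    using True assms by (intro integral_mono) auto
  then show ?thesis using assms by (auto intro: integral_nonneg_AE simp: prob_space)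
next
  case False then show ?thesis by (simp add: not_integrable_integral_eq)
qed

lemma key:
  fixes c :: ennreal and a b \<delta> :: real
  assumes "\<delta> > 0"
  shows "enn2real (min 1 c) - \<delta> - indicator {w. \<delta>/2 \<le> \<bar>w - 1\<bar>} a - indicator {w. \<delta>/2 \<le> \<bar>w - 1\<bar>} b
     \<le> enn2real (min 1 (c * ennreal (b / a)))"
proof -
  have m1: "enn2real (min 1 c) \<le> 1" 
    using enn2real_mono[of "min 1 c" 1] by simp
  have l0: "0 \<le> enn2real (min 1 (c * ennreal (b / a)))" by simp
  show ?thesis
  proof (cases "\<delta> \<ge> 1 \<or> \<delta>/2 \<le> \<bar>a - 1\<bar> \<or> \<delta>/2 \<le> \<bar>b - 1\<bar>")
    case True
    have ia: "0 \<le> (indicator {w. \<delta>/2 \<le> \<bar>w - 1\<bar>} a :: real)" "0 \<le> (indicator {w. \<delta>/2 \<le> \<bar>w - 1\<bar>} b :: real)"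
      by auto
    from True show ?thesis
    proof (elim disjE)
      assume "1 \<le> \<delta>" then show ?thesis using m1 l0 ia by linarith
    next
      assume "\<delta>/2 \<le> \<bar>a - 1\<bar>"
      then have "indicator {w. \<delta>/2 \<le> \<bar>w - 1\<bar>} a = (1::real)" by simp
      then show ?thesis using m1 l0 ia assms by linarith
    next
      assume "\<delta>/2 \<le> \<bar>b - 1\<bar>"
      then have "indicator {w. \<delta>/2 \<le> \<bar>w - 1\<bar>} b = (1::real)" by simp
      then show ?thesis using m1 l0 ia assms by linarith
    qed
  next
    case False
    then have d1: "\<delta> < 1" and ga: "\<bar>a - 1\<bar> < \<delta>/2" and gb: "\<bar>b - 1\<bar> < \<delta>/2" by auto
    have apos: "a > 0" using ga d1 abs_ge_minus_self[of "a-1"] by linarith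
    have "(1 - \<delta>) * a \<le> b"
    proof -
      have "(1 - \<delta>) * a \<le> (1-\<delta>) * (1 + \<delta>/2)" using ga d1 abs_ge_self[of "a-1"] by (intro mult_left_mono) auto
      also have "\<dots> \<le> 1 - \<delta>/2" using assms by (simp add: algebra_simps)
      also have "\<dots> \<le> b" using gb abs_ge_minus_self[of "b-1"] by linarith
      finally show ?thesis .
    qed
    then have tge: "1 - \<delta> \<le> b / a" using apos by (simp add: field_simps)
    have tpos: "b / a > 0" using tge d1 by linarith
    have ind: "indicator {w. \<delta>/2 \<le> \<bar>w - 1\<bar>} a = (0::real)" "indicator {w. \<delta>/2 \<le> \<bar>w - 1\<bar>} b = (0::real)"
      using ga gb by (auto simp: indicator_def)
    show ?thesis
    proof (cases c)
      case (real r)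
      then have r0: "r \<ge> 0" by simp
      have e: "c * ennreal (b / a) = ennreal (r * (b/a))" using real r0 tpos
        using ennreal_mult[of r "b/a"] by simp
      have e1: "enn2real (min 1 (ennreal x)) = min 1 x" if "x \<ge> 0" for x :: real
        using that by (cases "x \<le> 1") (auto simp: min_def)
      have "min 1 r - \<delta> \<le> min 1 (r * (b/a))"
      proof (cases "r \<le> 1")
        case True
        have "r * (1 - \<delta>) \<le> r * (b/a)" using r0 tge by (intro mult_left_mono) auto
        moreover have "r - \<delta> \<le> r * (1 - \<delta>)" using True assms r0 by (simp add: algebra_simps mult_left_le_one_le)
        ultimately show ?thesis using True d1 assms by auto
      next
        case False
        have "1 * (b / a) \<le> r * (b/a)" using False tpos by (intro mult_right_mono) auto
        then show ?thesis using tge False assms by auto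
      qed
      moreover have rt0: "0 \<le> r * (b/a)" using r0 tpos by (intro mult_nonneg_nonneg) auto
      moreover have "enn2real (min 1 (c * ennreal (b/a))) = min 1 (r*(b/a))"
        using e e1[OF rt0] by simp
      moreover have "enn2real (min 1 c) = min 1 r" using real e1[OF r0] by simp
      ultimately show ?thesis using ind by linarith
    next
      case top
      then have "c * ennreal (b / a) = \<infinity>" using tpos apos by (cases "b = 0") (simp_all add: ennreal_top_mult)
      then show ?thesis using top ind assms by simp
    qed
  qed
qed

theorem lemma3p4:
  fixes M \<mu> \<pi> :: "'a measure" and p :: "'a \<Rightarrow> ennreal"
    and q :: "'a \<Rightarrow> 'a measure" and Q :: "'a \<Rightarrow> nat \<Rightarrow> real measure"
    and x :: 'a and N :: nat and \<delta> :: real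
  assumes sets_mu: "sets \<mu> = sets M"
    and p_meas: "p \<in> borel_measurable M"
    and pi_density: "\<pi> = density \<mu> p"
    and pi_prob: "prob_space \<pi>"
    and q_kernel: "q \<in> M \<rightarrow>\<^sub>M prob_algebra M"
    and Q_kernel: "\<And>n. n \<ge> 1 \<Longrightarrow> (\<lambda>x'. Q x' n) \<in> M \<rightarrow>\<^sub>M prob_algebra borel"
    and Q_pos: "\<And>x' n. x' \<in> space M \<Longrightarrow> n \<ge> 1 \<Longrightarrow> AE w in Q x' n. w > 0"
    and Q_integrable: "\<And>x' n. x' \<in> space M \<Longrightarrow> n \<ge> 1 \<Longrightarrow> integrable (Q x' n) (\<lambda>w. w)"
    and Q_mean: "\<And>x' n. x' \<in> space M \<Longrightarrow> n \<ge> 1 \<Longrightarrow> (\<integral>w. w \<partial>(Q x' n)) = 1"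
    and x_in: "x \<in> space M"
    and N_pos: "N \<ge> 1"
    and delta_pos: "\<delta> > 0"
  shows "pm_rho M \<pi> q Q N x - mh_rho M \<pi> q x
           \<le> \<delta> + 2 * (SUP x'\<in>space M. measure (Q x' N) {w. \<bar>w - 1\<bar> \<ge> \<delta> / 2})"
  proof -
  define B where "B = {w::real. \<bar>w - 1\<bar> \<ge> \<delta> / 2}"
  define S where "S = (SUP x'\<in>space M. measure (Q x' N) B)"
  define F where "F c a b = enn2real (min 1 (c * ennreal (b / a)))" for c :: ennreal and a b :: real
  have F01: "0 \<le> F c a b \<and> F c a b \<le> 1" for c a b
    unfolding F_def using enn2real_mono[of "min 1 (c * ennreal (b / a))" 1] by simp
  have QK: "(\<lambda>x'. Q x' N) \<in> M \<rightarrow>\<^sub>M prob_algebra borel" using Q_kernel N_pos .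
  have QK': "(\<lambda>x'. Q x' N) \<in> M \<rightarrow>\<^sub>M subprob_algebra borel" using measurable_prob_algebraD[OF QK] .
  have Qsp: "sets (Q x' N) = sets borel \<and> prob_space (Q x' N)" if "x' \<in> space M" for x'
    using measurable_space[OF QK that] by (simp add: space_prob_algebra)
  have Bsets: "B \<in> sets borel" unfolding B_def by measurable
  have PS: "measure (Q x' N) B \<le> S" if "x' \<in> space M" for x'
    unfolding S_def
  proof (rule cSUP_upper[OF that])
    show "bdd_above ((\<lambda>x'. measure (Q x' N) B) ` space M)"
    proof (rule bdd_aboveI2)
      fix z assume "z \<in> space M"
      then interpret prob_space "Q z N" using Qsp by blast
      show "measure (Q z N) B \<le> 1" by simp
    qed
  qed
  have qsp: "sets (q x) = sets M \<and> prob_space (q x)"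
    using measurable_space[OF q_kernel x_in] by (simp add: space_prob_algebra)
  interpret qx: prob_space "q x" using qsp by blast
  have pi_ne: "space \<pi> \<noteq> {}" using pi_prob prob_space.not_empty by blast
  have pq_sets: "sets (pq_measure M \<pi> q) = sets (M \<Otimes>\<^sub>M M)"
    unfolding pq_measure_def by (rule sets_bind) (simp_all add: pi_ne)
  have rmeas: "mh_ratio M \<pi> q \<in> borel_measurable (M \<Otimes>\<^sub>M M)"
    unfolding mh_ratio_def
    using borel_measurable_RN_deriv measurable_cong_sets[OF pq_sets refl] by blast
  have ry[measurable]: "(\<lambda>y. mh_ratio M \<pi> q (x, y)) \<in> borel_measurable M"
    by (rule measurable_compose[OF measurable_Pair1'[OF x_in] rmeas])
  have pa: "mh_alpha M \<pi> q x y - \<delta> - 2 * S \<le> pm_alpha M \<pi> q Q N x y" if y: "y \<in> space M" for y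
  proof -
    define c where "c = mh_ratio M \<pi> q (x, y)"
    define m where "m = enn2real (min 1 c)"
    interpret Qx: prob_space "Q x N" using Qsp x_in by blast
    interpret Qy: prob_space "Q y N" using Qsp y by blast
    have sx: "sets (Q x N) = sets borel" using Qsp x_in by blast
    have sy: "sets (Q y N) = sets borel" using Qsp y by blast
    have spx: "space (Q x N) = UNIV" using sets_eq_imp_space_eq[OF sx] by simp
    have spy: "space (Q y N) = UNIV" using sets_eq_imp_space_eq[OF sy] by simp
    have Fm: "(\<lambda>(a, b). F c a b) \<in> borel_measurable (borel \<Otimes>\<^sub>M borel)"
      unfolding F_def by measurable
    have Fmy: "F c a \<in> borel_measurable (Q y N)" for a
      unfolding F_def measurable_cong_sets[OF sy refl] by measurable
    have intFy: "integrable (Q y N) (F c a)" for a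
      by (rule Qy.integrable_const_bound[where B=1]) (use F01 Fmy in auto)
    have Bmx: "B \<in> sets (Q x N)" "B \<in> sets (Q y N)" using Bsets sx sy by auto
    have inner: "m - \<delta> - indicator B a - measure (Q y N) B \<le> (\<integral>b. F c a b \<partial>Q y N)" for a
    proof -
      have "(\<integral>b. (m - \<delta> - indicator B a) - indicator B b \<partial>Q y N)
          = (m - \<delta> - indicator B a) - measure (Q y N) B"
        using Bochner_Integration.integral_diff[where M="Q y N" and f="\<lambda>_. m - \<delta> - indicator B a" and g="indicator B", OF Qy.integrable_const integrable_real_indicator] Bmx
        by (simp add: spy Qy.prob_space[unfolded spy] Qy.emeasure_finite less_top[symmetric])
      also have "(\<integral>b. (m - \<delta> - indicator B a) - indicator B b \<partial>Q y N) \<le> (\<integral>b. F c a b \<partial>Q y N)"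
      proof (rule integral_mono)
        show "integrable (Q y N) (\<lambda>b. m - \<delta> - indicator B a - indicator B b)"
          using Bochner_Integration.integrable_diff[where M="Q y N" and f="\<lambda>_. m - \<delta> - indicator B a" and g="indicator B", OF Qy.integrable_const integrable_real_indicator] Bmx
          by (simp add: Qy.emeasure_finite less_top[symmetric])
        show "integrable (Q y N) (F c a)" by (rule intFy)
        fix b show "m - \<delta> - indicator B a - indicator B b \<le> F c a b"
          unfolding m_def F_def B_def using key[OF delta_pos, of c a b] by simp
      qed
      ultimately show ?thesis by simp
    qed
    have Gm: "(\<lambda>a. \<integral>b. F c a b \<partial>Q y N) \<in> borel_measurable (Q x N)"
    proof (rule Qy.borel_measurable_lebesgue_integral)
      show "(\<lambda>(a, b). F c a b) \<in> borel_measurable (Q x N \<Otimes>\<^sub>M Q y N)"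
        using Fm measurable_cong_sets[OF sets_pair_measure_cong[OF sx sy] refl] by blast
    qed
    have intG: "integrable (Q x N) (\<lambda>a. \<integral>b. F c a b \<partial>Q y N)"
    proof (rule Qx.integrable_const_bound[where B=1])
      show "AE a in Q x N. norm (\<integral>b. F c a b \<partial>Q y N) \<le> 1"
        using integral_01[OF Qy.prob_space_axioms, of "F c a" for a] F01 by auto
    qed (rule Gm)
    have outer: "m - \<delta> - measure (Q y N) B - measure (Q x N) B \<le> (\<integral>a. \<integral>b. F c a b \<partial>Q y N \<partial>Q x N)"
    proof -
      have "(\<integral>a. (m - \<delta> - measure (Q y N) B) - indicator B a \<partial>Q x N)
          = (m - \<delta> - measure (Q y N) B) - measure (Q x N) B"
        using Bochner_Integration.integral_diff[where M="Q x N" and f="\<lambda>_. m - \<delta> - measure (Q y N) B" and g="indicator B", OF Qx.integrable_const integrable_real_indicator] Bmx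
        by (simp add: spx Qx.prob_space[unfolded spx] Qx.emeasure_finite less_top[symmetric])
      also have "(\<integral>a. (m - \<delta> - measure (Q y N) B) - indicator B a \<partial>Q x N) \<le> (\<integral>a. \<integral>b. F c a b \<partial>Q y N \<partial>Q x N)"
      proof (rule integral_mono)
        show "integrable (Q x N) (\<lambda>a. m - \<delta> - measure (Q y N) B - indicator B a)"
          using Bochner_Integration.integrable_diff[where M="Q x N" and f="\<lambda>_. m - \<delta> - measure (Q y N) B" and g="indicator B", OF Qx.integrable_const integrable_real_indicator] Bmx
          by (simp add: Qx.emeasure_finite less_top[symmetric])
        show "integrable (Q x N) (\<lambda>a. \<integral>b. F c a b \<partial>Q y N)" by (rule intG)
        fix a show "m - \<delta> - measure (Q y N) B - indicator B a \<le> (\<integral>b. F c a b \<partial>Q y N)"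
          using inner[of a] by linarith
      qed
      ultimately show ?thesis by simp
    qed
    have "pm_alpha M \<pi> q Q N x y = (\<integral>a. \<integral>b. F c a b \<partial>Q y N \<partial>Q x N)"
      unfolding pm_alpha_def F_def c_def ..
    moreover have "mh_alpha M \<pi> q x y = m" unfolding mh_alpha_def m_def c_def ..
    ultimately show ?thesis using outer PS[OF x_in] PS[OF y] by linarith
  qed
  have mhm: "mh_alpha M \<pi> q x \<in> borel_measurable (q x)"
    unfolding mh_alpha_def measurable_cong_sets[OF conjunct1[OF qsp] refl] by measurable
  have int_mh: "integrable (q x) (mh_alpha M \<pi> q x)"
  proof (rule qx.integrable_const_bound[where B=1])
    show "AE y in q x. norm (mh_alpha M \<pi> q x y) \<le> 1"
      unfolding mh_alpha_def using enn2real_mono[of "min 1 _" 1] by simp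
  qed (rule mhm)
  define f where "f z b = F (mh_ratio M \<pi> q (x, fst z)) (snd z) b" for z :: "'a \<times> real" and b
  have fm: "(\<lambda>(z, b). f z b) \<in> borel_measurable ((M \<Otimes>\<^sub>M borel) \<Otimes>\<^sub>M borel)"
    unfolding f_def F_def by measurable
  have LK: "(\<lambda>z. Q (fst z) N) \<in> (M \<Otimes>\<^sub>M borel) \<rightarrow>\<^sub>M subprob_algebra borel"
    by (rule measurable_compose[OF measurable_fst QK'])
  have Gm: "(\<lambda>z. \<integral>b. f z b \<partial>Q (fst z) N) \<in> borel_measurable (M \<Otimes>\<^sub>M borel)"
    by (rule integral_measurable_subprob_algebra2[OF fm LK])
  interpret Qx: prob_space "Q x N" using Qsp x_in by blast
  have sx: "sets (Q x N) = sets borel" using Qsp x_in by blast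
  have pmm: "(\<lambda>y. \<integral>a. (\<lambda>y a. \<integral>b. f (y, a) b \<partial>Q y N) y a \<partial>Q x N) \<in> borel_measurable M"
  proof (rule Qx.borel_measurable_lebesgue_integral)
    show "(\<lambda>(y, a). \<integral>b. f (y, a) b \<partial>Q y N) \<in> borel_measurable (M \<Otimes>\<^sub>M Q x N)"
      unfolding measurable_cong_sets[OF sets_pair_measure_cong[OF refl sx] refl]
      using Gm by (simp add: case_prod_beta')
  qed
  have pm_eq: "pm_alpha M \<pi> q Q N x y = (\<integral>a. \<integral>b. f (y, a) b \<partial>Q y N \<partial>Q x N)" for y
    unfolding pm_alpha_def f_def F_def by simp
  have pmm': "pm_alpha M \<pi> q Q N x \<in> borel_measurable (q x)"
    unfolding measurable_cong_sets[OF conjunct1[OF qsp] refl] pm_eq using pmm by simp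
  have pm01: "0 \<le> pm_alpha M \<pi> q Q N x y \<and> pm_alpha M \<pi> q Q N x y \<le> 1" if "y \<in> space M" for y
  proof -
    have py: "prob_space (Q y N)" using Qsp that by blast
    define G where "G a = (\<integral>b. F (mh_ratio M \<pi> q (x, y)) a b \<partial>Q y N)" for a
    have G0: "0 \<le> G a" and G1: "G a \<le> 1" for a
      unfolding G_def using integral_01[OF py, of "F (mh_ratio M \<pi> q (x, y)) a"] F01 by auto
    have "0 \<le> (\<integral>a. G a \<partial>Q x N) \<and> (\<integral>a. G a \<partial>Q x N) \<le> 1"
      by (rule integral_01[OF Qx.prob_space_axioms G0 G1])
    then have "0 \<le> (\<integral>a. \<integral>b. F (mh_ratio M \<pi> q (x, y)) a b \<partial>Q y N \<partial>Q x N) \<and> (\<integral>a. \<integral>b. F (mh_ratio M \<pi> q (x, y)) a b \<partial>Q y N \<partial>Q x N) \<le> 1"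
      unfolding G_def .
    then show ?thesis unfolding pm_alpha_def F_def by simp
  qed
  have int_pm: "integrable (q x) (pm_alpha M \<pi> q Q N x)"
  proof (rule qx.integrable_const_bound[where B=1])
    show "AE y in q x. norm (pm_alpha M \<pi> q Q N x y) \<le> 1"
      using pm01 conjunct1[OF qsp] sets_eq_imp_space_eq[OF conjunct1[OF qsp]] by auto
  qed (rule pmm')
  have "pm_rho M \<pi> q Q N x - mh_rho M \<pi> q x
      = (\<integral>y. mh_alpha M \<pi> q x y - pm_alpha M \<pi> q Q N x y \<partial>q x)"
    unfolding pm_rho_def mh_rho_def using int_mh int_pm by simp
  also have "\<dots> \<le> (\<integral>y. \<delta> + 2 * S \<partial>q x)"
  proof (rule integral_mono)
    show "integrable (q x) (\<lambda>y. mh_alpha M \<pi> q x y - pm_alpha M \<pi> q Q N x y)"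
      using int_mh int_pm by auto
    show "integrable (q x) (\<lambda>y. \<delta> + 2 * S)" by simp
    fix y assume "y \<in> space (q x)"
    then have "y \<in> space M" using sets_eq_imp_space_eq[OF conjunct1[OF qsp]] by simp
    then show "mh_alpha M \<pi> q x y - pm_alpha M \<pi> q Q N x y \<le> \<delta> + 2 * S" using pa by force
  qed
  also have "\<dots> = \<delta> + 2 * S" by (simp add: qx.prob_space)
  finally show ?thesis unfolding S_def B_def .
qed

end
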